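(* In the Standing Setting, let $r^*=r/(r,\lambda)$ and $\lambda^*=\lambda/(r,\lambda)$. Then (i) $r^*=2(\omega-1)$; (ii) $k=\frac{\lambda^*(\omega+1)}{2}+1$; (iii) $b<4v$.
   Context: Standing Setting: $\mathcal{D}=(\Omega,\mathcal{B})$ is a non-trivial $2$-$(v,k,\lambda)$ design (every two distinct points in exactly $\lambda$ blocks, blocks of size $k$, $2<k<v$) with $b$ blocks and replication number $r$, satisfying $\lambda\ge (r,\lambda)^2$. $G\le\mathrm{Aut}(\mathcal{D})$ is flag-transitive (transitive on pairs $(p,B)$ with $p\in B\in\mathcal{B}$). Moreover $\Omega=\Delta\times\Delta$ with $|\Delta|=\omega\ge 5$ odd, so $v=\omega^2$, and $T\times T\trianglelefteq G\le T_0\wr \mathbb{Z}_2$ acting in product action (the $\mathbb{Z}_2$ interchanging the two coordinates), where $T_0\le\mathrm{Sym}(\Delta)$ is $2$-transitive with nonabelian simple socle $T$; $G$ has rank $3$ on $\Omega$. *)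

theory Defs
  imports "HOL-Algebra.Algebra"
begin

abbreviation perm_sub :: "'a set \<Rightarrow> ('a \<Rightarrow> 'a) set \<Rightarrow> ('a \<Rightarrow> 'a) monoid" where
  "perm_sub S H \<equiv> (BijGroup S)\<lparr>carrier := H\<rparr>"

definition minimal_normal :: "('g, 'b) monoid_scheme \<Rightarrow> 'g set \<Rightarrow> bool" where
  "minimal_normal G N \<longleftrightarrow> N \<lhd> G \<and> N \<noteq> {\<one>\<^bsub>G\<^esub>} \<and>
     (\<forall>M. M \<lhd> G \<and> M \<subseteq> N \<longrightarrow> M = {\<one>\<^bsub>G\<^esub>} \<or> M = N)"

definition socle :: "('g, 'b) monoid_scheme \<Rightarrow> 'g set" where
  "socle G = generate G (\<Union>{N. minimal_normal G N})"

definition two_transitive :: "'a set \<Rightarrow> ('a \<Rightarrow> 'a) set \<Rightarrow> bool" where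
  "two_transitive D H \<longleftrightarrow> (\<forall>a\<in>D. \<forall>b\<in>D. \<forall>c\<in>D. \<forall>d\<in>D. a \<noteq> b \<longrightarrow> c \<noteq> d \<longrightarrow>
     (\<exists>g\<in>H. g a = c \<and> g b = d))"

definition prod_perm :: "'a set \<Rightarrow> ('a \<Rightarrow> 'a) \<Rightarrow> ('a \<Rightarrow> 'a) \<Rightarrow> ('a \<times> 'a \<Rightarrow> 'a \<times> 'a)" where
  "prod_perm D g h = restrict (\<lambda>(x, y). (g x, h y)) (D \<times> D)"

definition swap_perm :: "'a set \<Rightarrow> ('a \<Rightarrow> 'a) \<Rightarrow> ('a \<Rightarrow> 'a) \<Rightarrow> ('a \<times> 'a \<Rightarrow> 'a \<times> 'a)" where
  "swap_perm D g h = restrict (\<lambda>(x, y). (g y, h x)) (D \<times> D)"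

definition base_group :: "'a set \<Rightarrow> ('a \<Rightarrow> 'a) set \<Rightarrow> ('a \<times> 'a \<Rightarrow> 'a \<times> 'a) set" where
  "base_group D T = {prod_perm D g h | g h. g \<in> T \<and> h \<in> T}"

text \<open>T0 wr Z2 in product action (the Z2 interchanging the coordinates)\<close>
definition wreath_prod_action :: "'a set \<Rightarrow> ('a \<Rightarrow> 'a) set \<Rightarrow> ('a \<times> 'a \<Rightarrow> 'a \<times> 'a) set" where
  "wreath_prod_action D T0 = base_group D T0 \<union> {swap_perm D g h | g h. g \<in> T0 \<and> h \<in> T0}"

definition orbital :: "('p \<Rightarrow> 'p) set \<Rightarrow> 'p \<times> 'p \<Rightarrow> ('p \<times> 'p) set" where
  "orbital G pq = {(g (fst pq), g (snd pq)) | g. g \<in> G}"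

definition transitive_on :: "('p \<Rightarrow> 'p) set \<Rightarrow> 'p set \<Rightarrow> bool" where
  "transitive_on G \<Omega> \<longleftrightarrow> (\<forall>p\<in>\<Omega>. \<forall>q\<in>\<Omega>. \<exists>g\<in>G. g p = q)"

definition has_rank :: "('p \<Rightarrow> 'p) set \<Rightarrow> 'p set \<Rightarrow> nat \<Rightarrow> bool" where
  "has_rank G \<Omega> n \<longleftrightarrow> transitive_on G \<Omega> \<and> card (orbital G ` (\<Omega> \<times> \<Omega>)) = n"

definition design_2 :: "'p set \<Rightarrow> 'p set set \<Rightarrow> nat \<Rightarrow> nat \<Rightarrow> nat \<Rightarrow> bool" where
  "design_2 P Bl v k lam \<longleftrightarrow> finite P \<and> card P = v \<and> (\<forall>blk\<in>Bl. blk \<subseteq> P \<and> card blk = k)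
     \<and> 2 < k \<and> k < v \<and> lam > 0
     \<and> (\<forall>x\<in>P. \<forall>y\<in>P. x \<noteq> y \<longrightarrow> card {blk\<in>Bl. x \<in> blk \<and> y \<in> blk} = lam)"

definition design_aut :: "'p set \<Rightarrow> 'p set set \<Rightarrow> ('p \<Rightarrow> 'p) \<Rightarrow> bool" where
  "design_aut P Bl g \<longleftrightarrow> bij_betw g P P \<and> (\<lambda>blk. g ` blk) ` Bl = Bl"

definition flag_transitive :: "'p set \<Rightarrow> 'p set set \<Rightarrow> ('p \<Rightarrow> 'p) set \<Rightarrow> bool" where
  "flag_transitive P Bl G \<longleftrightarrow> (\<forall>p blk q blk2. blk \<in> Bl \<and> p \<in> blk \<and> blk2 \<in> Bl \<and> q \<in> blk2 \<longrightarrow>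
     (\<exists>g\<in>G. g p = q \<and> g ` blk = blk2))"

end

theory Submission
  imports Defs Complex_Main
begin


lemma dc:
  assumes "finite S" "finite A"
  shows "(\<Sum>B\<in>S. card (f B \<inter> A)) = (\<Sum>x\<in>A. card {B\<in>S. x \<in> f B})"
proof -
  have 1: "card (f B \<inter> A) = (\<Sum>x\<in>A. if x \<in> f B then 1 else 0)" for B
    using assms(2) by (simp add: sum.If_cases Int_commute)
  have 2: "card {B\<in>S. x \<in> f B} = (\<Sum>B\<in>S. if x \<in> f B then 1 else 0)" for x
    using assms(1) by (simp add: sum.If_cases Collect_conj_eq Int_commute Collect_mem_eq)
  show ?thesis unfolding 1 2 by (rule sum.swap)
qed

lemma cs:
  fixes n :: "'a \<Rightarrow> real"
  assumes "finite S"
  shows "(\<Sum>i\<in>S. n i)^2 \<le> real (card S) * (\<Sum>i\<in>S. (n i)^2)"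
proof (cases "S = {}")
  case True then show ?thesis by simp
next
  case False
  define m where "m = (\<Sum>i\<in>S. n i) / real (card S)"
  have c: "real (card S) > 0" using False assms by (simp add: card_gt_0_iff)
  have "0 \<le> (\<Sum>i\<in>S. (n i - m)^2)" by (simp add: sum_nonneg)
  also have "\<dots> = (\<Sum>i\<in>S. (n i)^2) - 2 * m * (\<Sum>i\<in>S. n i) + m^2 * real (card S)"
    by (simp add: algebra_simps power2_eq_square sum_distrib_left sum.distrib sum_subtractf sum_distrib_right flip: sum_distrib_left)
  also have "\<dots> = (\<Sum>i\<in>S. (n i)^2) - (\<Sum>i\<in>S. n i)^2 / real (card S)"
    using c by (simp add: m_def power2_eq_square field_simps)
  finally show ?thesis using c by (simp add: field_simps)
qed

lemma fisher_alg:
  fixes b v k r lam :: real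
  assumes bk: "b * k = v * r" and rk: "r * (k - 1) = lam * (v - 1)"
    and k: "k > 1" and vk: "v > k" and r: "r > 0"
    and ineq: "(k * (r - 1))^2 \<le> (b - 1) * (k * (r - 1) + k * (k - 1) * (lam - 1))"
  shows "r \<ge> k"
proof -
  have v1: "v - 1 > 0" using vk k by linarith
  have "k * (k * (r - 1)^2) \<le> k * ((b - 1) * ((r - 1) + (k - 1) * (lam - 1)))"
    using ineq by (simp add: power2_eq_square algebra_simps)
  hence i1: "k * (r - 1)^2 \<le> (b - 1) * ((r - 1) + (k - 1) * (lam - 1))"
    using k by simp
  have "k * (v - 1) * (k * (r - 1)^2) \<le> k * (v - 1) * ((b - 1) * ((r - 1) + (k - 1) * (lam - 1)))"
    using i1 k v1 by (intro mult_left_mono) auto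
  also have "\<dots> = (b * k - k) * ((v - 1) * (r - k) + (k - 1) * (lam * (v - 1)))"
    by (simp add: algebra_simps)
  also have "\<dots> = (v * r - k) * ((v - 1) * (r - k) + (k - 1) * (r * (k - 1)))"
    by (simp add: bk rk)
  finally have "0 \<le> (v * r - k) * ((v - 1) * (r - k) + (k - 1) * (r * (k - 1))) - k * (v - 1) * (k * (r - 1)^2)"
    by simp
  also have "\<dots> = (r - k) * (r * (v - k)^2)"
    by (simp add: algebra_simps power2_eq_square)
  finally have "0 \<le> (r - k) * (r * (v - k)^2)" .
  moreover have "r * (v - k)^2 > 0" using r vk by simp
  ultimately show ?thesis by (simp add: zero_le_mult_iff)
qed



lemma design_facts:
  assumes des: "design_2 P Bl v k lam"
    and rd: "\<forall>x\<in>P. card {blk\<in>Bl. x \<in> blk} = r"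
    and bd: "b = card Bl"
  shows "b * k = v * r \<and> r * (k - 1) = lam * (v - 1) \<and> r \<ge> k"
proof -
  have finP: "finite P" and cP: "card P = v" and blk: "\<And>B. B \<in> Bl \<Longrightarrow> B \<subseteq> P \<and> card B = k"
    and k2: "2 < k" and kv: "k < v" and l0: "lam > 0"
    and lam: "\<And>x y. x \<in> P \<Longrightarrow> y \<in> P \<Longrightarrow> x \<noteq> y \<Longrightarrow> card {blk\<in>Bl. x \<in> blk \<and> y \<in> blk} = lam"
    using des unfolding design_2_def by auto
  have finBl: "finite Bl"
    by (rule finite_subset[of _ "Pow P"]) (use blk finP in auto)
  have finB: "\<And>B. B \<in> Bl \<Longrightarrow> finite B" using blk finP finite_subset by blast
  have e1: "b * k = v * r"
  proof -
    have "(\<Sum>B\<in>Bl. card ((\<lambda>B. B) B \<inter> P)) = (\<Sum>x\<in>P. card {B\<in>Bl. x \<in> (\<lambda>B. B) B})"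
      by (rule dc[OF finBl finP])
    moreover have "(\<Sum>B\<in>Bl. card (B \<inter> P)) = b * k"
      using blk bd by (simp add: Int_absorb2)
    moreover have "(\<Sum>x\<in>P. card {B\<in>Bl. x \<in> B}) = v * r" using rd cP by simp
    ultimately show ?thesis by simp
  qed
  obtain x0 where x0: "x0 \<in> P" using kv cP k2 by (metis card.empty ex_in_conv not_less_zero)
  have e2: "r * (k - 1) = lam * (v - 1)"
  proof -
    let ?X = "{B\<in>Bl. x0 \<in> B}"
    have fX: "finite ?X" using finBl by simp
    have "(\<Sum>B\<in>?X. card ((\<lambda>B. B) B \<inter> (P - {x0}))) = (\<Sum>y\<in>P - {x0}. card {B\<in>?X. y \<in> (\<lambda>B. B) B})"
      by (rule dc[OF fX]) (use finP in simp)
    moreover have "(\<Sum>B\<in>?X. card (B \<inter> (P - {x0}))) = r * (k - 1)"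
    proof -
      have "\<And>B. B \<in> ?X \<Longrightarrow> card (B \<inter> (P - {x0})) = k - 1"
      proof -
        fix B assume "B \<in> ?X"
        hence "B \<inter> (P - {x0}) = B - {x0}" "x0 \<in> B" "card B = k" "finite B" using blk finB by auto
        thus "card (B \<inter> (P - {x0})) = k - 1" by simp
      qed
      hence "(\<Sum>B\<in>?X. card (B \<inter> (P - {x0}))) = card ?X * (k - 1)" by simp
      thus ?thesis using rd x0 by simp
    qed
    moreover have "(\<Sum>y\<in>P - {x0}. card {B\<in>?X. y \<in> B}) = lam * (v - 1)"
    proof -
      have "\<And>y. y \<in> P - {x0} \<Longrightarrow> card {B\<in>?X. y \<in> B} = lam"
      proof -
        fix y assume y: "y \<in> P - {x0}"
        have "{B\<in>?X. y \<in> B} = {blk\<in>Bl. x0 \<in> blk \<and> y \<in> blk}" by auto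
        thus "card {B\<in>?X. y \<in> B} = lam" using lam[of x0 y] y x0 by auto
      qed
      hence "(\<Sum>y\<in>P - {x0}. card {B\<in>?X. y \<in> B}) = card (P - {x0}) * lam" by simp
      thus ?thesis using cP x0 finP by simp
    qed
    ultimately show ?thesis by simp
  qed
  obtain y0 where y0: "y0 \<in> P" "y0 \<noteq> x0"
  proof -
    have "card (P - {x0}) > 0" using cP x0 finP kv k2 by simp
    hence "P - {x0} \<noteq> {}" by (metis card.empty less_irrefl)
    thus ?thesis using that by blast
  qed
  have "{blk\<in>Bl. x0 \<in> blk \<and> y0 \<in> blk} \<noteq> {}" using lam[OF x0 y0(1)] y0 l0 by (metis card.empty less_irrefl)
  then obtain B0 where B0: "B0 \<in> Bl" and x0B0: "x0 \<in> B0" by auto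
  let ?S = "Bl - {B0}"
  have fS: "finite ?S" using finBl by simp
  have cS: "card ?S = b - 1" using B0 finBl bd by simp
  have fB0: "finite B0" using finB B0 by simp
  have kB0: "card B0 = k" using blk B0 by simp
  have rx: "\<And>x. x \<in> B0 \<Longrightarrow> card {B\<in>?S. x \<in> B} = r - 1"
  proof -
    fix x assume x: "x \<in> B0"
    have "{B\<in>?S. x \<in> B} = {B\<in>Bl. x \<in> B} - {B0}" by auto
    moreover have "x \<in> P" using x blk B0 by auto
    ultimately show "card {B\<in>?S. x \<in> B} = r - 1" using rd x B0 finBl by simp
  qed
  have s1: "(\<Sum>B\<in>?S. card (B \<inter> B0)) = k * (r - 1)"
  proof -
    have "(\<Sum>B\<in>?S. card ((\<lambda>B. B) B \<inter> B0)) = (\<Sum>x\<in>B0. card {B\<in>?S. x \<in> (\<lambda>B. B) B})"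
      by (rule dc[OF fS fB0])
    also have "\<dots> = k * (r - 1)" using rx kB0 by simp
    finally show ?thesis by simp
  qed
  have s2: "(\<Sum>B\<in>?S. (card (B \<inter> B0))^2) = k * (r - 1) + (k * k - k) * (lam - 1)"
  proof -
    have sq: "(card (B \<inter> B0))^2 = card ((B \<times> B) \<inter> (B0 \<times> B0))" for B
      by (simp add: power2_eq_square Times_Int_Times card_cartesian_product)
    have "(\<Sum>B\<in>?S. card ((\<lambda>B. B \<times> B) B \<inter> (B0 \<times> B0))) = (\<Sum>p\<in>B0 \<times> B0. card {B\<in>?S. p \<in> (\<lambda>B. B \<times> B) B})"
      by (rule dc[OF fS]) (use fB0 in simp)
    also have "\<dots> = (\<Sum>p\<in>B0 \<times> B0. if fst p = snd p then r - 1 else lam - 1)"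
    proof (rule sum.cong[OF refl])
      fix p assume p: "p \<in> B0 \<times> B0"
      obtain x y where xy: "p = (x, y)" by force
      have xP: "x \<in> P" "y \<in> P" using p xy blk B0 by auto
      show "card {B\<in>?S. p \<in> B \<times> B} = (if fst p = snd p then r - 1 else lam - 1)"
      proof (cases "x = y")
        case True
        have "{B\<in>?S. p \<in> B \<times> B} = {B\<in>?S. x \<in> B}" using True xy by auto
        thus ?thesis using rx[of x] p xy True by simp
      next
        case False
        have "{B\<in>?S. p \<in> B \<times> B} = {blk\<in>Bl. x \<in> blk \<and> y \<in> blk} - {B0}" using xy by auto
        moreover have "B0 \<in> {blk\<in>Bl. x \<in> blk \<and> y \<in> blk}" using B0 p xy by auto
        ultimately show ?thesis using lam[OF xP False] False xy finBl by simp
      qed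
    qed
    also have "\<dots> = card ((B0 \<times> B0) \<inter> {p. fst p = snd p}) * (r - 1) + card ((B0 \<times> B0) - {p. fst p = snd p}) * (lam - 1)"
    proof -
      have f: "finite (B0 \<times> B0)" using fB0 by simp
      have "(B0 \<times> B0) \<inter> - {p. fst p = snd p} = (B0 \<times> B0) - {p. fst p = snd p}" by blast
      thus ?thesis using sum.If_cases[OF f, of "\<lambda>p. fst p = snd p" "\<lambda>_. r - 1" "\<lambda>_. lam - 1"] by simp
    qed
    also have "\<dots> = k * (r - 1) + (k * k - k) * (lam - 1)"
    proof -
      have d: "(B0 \<times> B0) \<inter> {p. fst p = snd p} = (\<lambda>x. (x, x)) ` B0" by auto
      have cd: "card ((B0 \<times> B0) \<inter> {p. fst p = snd p}) = k"
        unfolding d using kB0 by (simp add: card_image inj_on_def)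
      have "card ((B0 \<times> B0) - {p. fst p = snd p}) = card (B0 \<times> B0) - card ((B0 \<times> B0) \<inter> {p. fst p = snd p})"
      proof -
        have "(B0 \<times> B0) - {p. fst p = snd p} = (B0 \<times> B0) - ((B0 \<times> B0) \<inter> {p. fst p = snd p})" by blast
        thus ?thesis using fB0 by (simp add: card_Diff_subset)
      qed
      hence "card ((B0 \<times> B0) - {p. fst p = snd p}) = k * k - k" using cd kB0 by (simp add: card_cartesian_product)
      thus ?thesis using cd by simp
    qed
    finally show ?thesis by (simp add: sq)
  qed
  have r1: "r \<ge> 1"
  proof -
    have "card {B\<in>Bl. x0 \<in> B} > 0" using B0 x0B0 finBl by (auto simp: card_gt_0_iff)
    thus ?thesis using rd x0 by simp
  qed
  have b1: "b \<ge> 1" using B0 finBl bd by (auto simp: Suc_le_eq card_gt_0_iff)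
  have l1: "lam \<ge> 1" using l0 by simp
  have "(\<Sum>B\<in>?S. real (card (B \<inter> B0)))^2 \<le> real (card ?S) * (\<Sum>B\<in>?S. (real (card (B \<inter> B0)))^2)"
    by (rule cs[OF fS])
  also have "(\<Sum>B\<in>?S. real (card (B \<inter> B0))) = real (k * (r - 1))"
    by (subst of_nat_sum[symmetric]) (simp only: s1)
  also have "(\<Sum>B\<in>?S. (real (card (B \<inter> B0)))^2) = real (k * (r - 1) + (k * k - k) * (lam - 1))"
    by (simp only: of_nat_power[symmetric] of_nat_sum[symmetric] s2)
  finally have ineq0: "(real (k * (r - 1)))^2 \<le> real (b - 1) * real (k * (r - 1) + (k * k - k) * (lam - 1))"
    using cS by simp
  have kk: "k * k - k = k * (k - 1)" by (simp add: diff_mult_distrib2)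
  have ineq: "(real k * (real r - 1))^2 \<le> (real b - 1) * (real k * (real r - 1) + real k * (real k - 1) * (real lam - 1))"
    using ineq0 r1 b1 l1 k2 unfolding kk by (simp only: of_nat_mult of_nat_add of_nat_diff of_nat_1 mult.assoc)
  have "real r \<ge> real k"
  proof (rule fisher_alg)
    show "real b * real k = real v * real r" using e1 by (simp only: of_nat_mult[symmetric])
    show "real r * (real k - 1) = real lam * (real v - 1)"
    proof -
      have "real (r * (k - 1)) = real (lam * (v - 1))" using e2 by simp
      thus ?thesis using k2 kv by (simp add: of_nat_diff)
    qed
  qed (use k2 kv r1 ineq in auto)
  thus ?thesis using e1 e2 by simp
qed



lemma inv_O:
  assumes g: "g \<in> wreath_prod_action D T0" and T0: "T0 \<subseteq> Bij D"
    and x: "x1 \<in> D" "x2 \<in> D" and gx: "g (x1, x2) = (x1, x2)"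
    and p: "p \<in> {q\<in>D \<times> D. (fst q = x1) \<noteq> (snd q = x2)}"
  shows "g p \<in> {q\<in>D \<times> D. (fst q = x1) \<noteq> (snd q = x2)}"
proof -
  obtain a b where ab: "p = (a, b)" "a \<in> D" "b \<in> D" "(a = x1) \<noteq> (b = x2)" using p by auto
  from g consider (P) g1 h1 where "g = prod_perm D g1 h1" "g1 \<in> T0" "h1 \<in> T0"
    | (S) g1 h1 where "g = swap_perm D g1 h1" "g1 \<in> T0" "h1 \<in> T0"
    unfolding wreath_prod_action_def base_group_def by blast
  then show ?thesis
  proof cases
    case P
    have b1: "bij_betw g1 D D" "bij_betw h1 D D" using P T0 unfolding Bij_def by auto
    have e: "g1 x1 = x1" "h1 x2 = x2" using gx x P unfolding prod_perm_def by auto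
    have gp: "g p = (g1 a, h1 b)" using P ab unfolding prod_perm_def by auto
    have "g1 a = x1 \<longleftrightarrow> a = x1" using b1(1) e ab x by (metis bij_betw_iff_bijections)
    moreover have "h1 b = x2 \<longleftrightarrow> b = x2" using b1(2) e ab x by (metis bij_betw_iff_bijections)
    moreover have "g1 a \<in> D" "h1 b \<in> D" using b1 ab by (auto simp: bij_betw_def)
    ultimately show ?thesis using gp ab by auto
  next
    case S
    have b1: "bij_betw g1 D D" "bij_betw h1 D D" using S T0 unfolding Bij_def by auto
    have e: "g1 x2 = x1" "h1 x1 = x2" using gx x S unfolding swap_perm_def by auto
    have gp: "g p = (g1 b, h1 a)" using S ab unfolding swap_perm_def by auto
    have "g1 b = x1 \<longleftrightarrow> b = x2" using b1(1) e ab x by (metis bij_betw_iff_bijections)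
    moreover have "h1 a = x2 \<longleftrightarrow> a = x1" using b1(2) e ab x by (metis bij_betw_iff_bijections)
    moreover have "g1 b \<in> D" "h1 a \<in> D" using b1 ab by (auto simp: bij_betw_def)
    ultimately show ?thesis using gp ab by auto
  qed
qed

lemma card_O:
  assumes "finite D" "card D = w" "x1 \<in> D" "x2 \<in> D"
  shows "card {q\<in>D \<times> D. (fst q = x1) \<noteq> (snd q = x2)} = 2 * (w - 1)"
proof -
  have "{q\<in>D \<times> D. (fst q = x1) \<noteq> (snd q = x2)} = ({x1} \<times> (D - {x2})) \<union> ((D - {x1}) \<times> {x2})"
    using assms by auto
  moreover have "card (({x1} \<times> (D - {x2})) \<union> ((D - {x1}) \<times> {x2})) = (w - 1) + (w - 1)"
    using assms by (subst card_Un_disjoint) (auto simp: card_cartesian_product)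
  ultimately show ?thesis by simp
qed

lemma subdeg:
  assumes fin: "finite D" and cD: "card D = w" and des: "design_2 (D \<times> D) Bl v k lam"
    and rd: "\<forall>x\<in>D \<times> D. card {blk\<in>Bl. x \<in> blk} = r"
    and aut: "\<forall>g\<in>G. design_aut (D \<times> D) Bl g" and flag: "flag_transitive (D \<times> D) Bl G"
    and T0: "T0 \<subseteq> Bij D" and wr: "G \<subseteq> wreath_prod_action D T0"
    and x1: "x1 \<in> D" and x2: "x2 \<in> D"
  shows "\<exists>c. r * c = lam * (2 * (w - 1))"
proof -
  define Ob where "Ob = {q\<in>D \<times> D. (fst q = x1) \<noteq> (snd q = x2)}"
  define Xb where "Xb = {B\<in>Bl. (x1, x2) \<in> B}"
  have blk: "\<And>B. B \<in> Bl \<Longrightarrow> B \<subseteq> D \<times> D"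
    and lam: "\<And>x y. x \<in> D \<times> D \<Longrightarrow> y \<in> D \<times> D \<Longrightarrow> x \<noteq> y \<Longrightarrow> card {blk\<in>Bl. x \<in> blk \<and> y \<in> blk} = lam"
    using des unfolding design_2_def by blast+
  have finP: "finite (D \<times> D)" using fin by simp
  have finBl: "finite Bl"
    by (rule finite_subset[of _ "Pow (D \<times> D)"]) (use blk finP in auto)
  have fXb: "finite Xb" using finBl Xb_def by simp
  have fO: "finite Ob" using finP Ob_def by simp
  have cO: "card Ob = 2 * (w - 1)" unfolding Ob_def by (rule card_O[OF fin cD x1 x2])
  have rXb: "card Xb = r" using rd x1 x2 Xb_def by simp
  have sum_eq: "(\<Sum>B\<in>Xb. card (B \<inter> Ob)) = 2 * (w - 1) * lam"
  proof -
    have "(\<Sum>B\<in>Xb. card ((\<lambda>B. B) B \<inter> Ob)) = (\<Sum>y\<in>Ob. card {B\<in>Xb. y \<in> (\<lambda>B. B) B})"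
      by (rule dc[OF fXb fO])
    also have "\<dots> = (\<Sum>y\<in>Ob. lam)"
    proof (rule sum.cong[OF refl])
      fix y assume y: "y \<in> Ob"
      have "{B\<in>Xb. y \<in> B} = {blk\<in>Bl. (x1, x2) \<in> blk \<and> y \<in> blk}" using Xb_def by auto
      moreover have "y \<in> D \<times> D" "(x1, x2) \<noteq> y" using y Ob_def by auto
      ultimately show "card {B\<in>Xb. y \<in> (\<lambda>B. B) B} = lam" using lam[of "(x1, x2)" y] x1 x2 by auto
    qed
    finally show ?thesis using cO by simp
  qed
  show ?thesis
  proof (cases "Xb = {}")
    case True
    then show ?thesis using sum_eq rXb by auto
  next
    case False
    then obtain B0 where B0: "B0 \<in> Xb" by blast
    have le: "card (B \<inter> Ob) \<le> card (B' \<inter> Ob)" if B: "B \<in> Xb" and B': "B' \<in> Xb" for B B'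
    proof -
      have "B \<in> Bl" "(x1, x2) \<in> B" "B' \<in> Bl" "(x1, x2) \<in> B'" using B B' Xb_def by auto
      then obtain g where g: "g \<in> G" "g (x1, x2) = (x1, x2)" "g ` B = B'"
        using flag unfolding flag_transitive_def by blast
      have bij: "bij_betw g (D \<times> D) (D \<times> D)" using aut g(1) unfolding design_aut_def by auto
      have "B \<inter> Ob \<subseteq> D \<times> D" using Ob_def by auto
      moreover have "inj_on g (D \<times> D)" using bij by (simp add: bij_betw_def)
      ultimately have "inj_on g (B \<inter> Ob)" using inj_on_subset by blast
      moreover have "g ` (B \<inter> Ob) \<subseteq> B' \<inter> Ob"
      proof
        fix z assume "z \<in> g ` (B \<inter> Ob)"
        then obtain q where q: "q \<in> B" "q \<in> Ob" "z = g q" by auto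
        have "g q \<in> Ob" using inv_O[of g D T0 x1 x2 q, OF _ T0 x1 x2 g(2)] q(2) wr g(1) Ob_def by auto
        thus "z \<in> B' \<inter> Ob" using q g(3) by auto
      qed
      moreover have "finite (B' \<inter> Ob)" using fO by simp
      ultimately show ?thesis by (rule card_inj_on_le)
    qed
    have "\<And>B. B \<in> Xb \<Longrightarrow> card (B \<inter> Ob) = card (B0 \<inter> Ob)"
    proof -
      fix B assume "B \<in> Xb"
      from le[OF this B0] le[OF B0 this] show "card (B \<inter> Ob) = card (B0 \<inter> Ob)" by simp
    qed
    hence "(\<Sum>B\<in>Xb. card (B \<inter> Ob)) = r * card (B0 \<inter> Ob)" using rXb by simp
    hence "r * card (B0 \<inter> Ob) = lam * (2 * (w - 1))" using sum_eq by (simp add: mult.commute)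
    thus ?thesis by blast
  qed
qed



theorem lemma2p1:
  fixes D :: "'a set" and Bl :: "('a \<times> 'a) set set"
    and G :: "('a \<times> 'a \<Rightarrow> 'a \<times> 'a) set" and T0 T :: "('a \<Rightarrow> 'a) set"
    and \<omega> v k lam b r :: nat
  assumes fin: "finite D" and card_D: "card D = \<omega>" and om5: "\<omega> \<ge> 5" and om_odd: "odd \<omega>"
    and des: "design_2 (D \<times> D) Bl v k lam"
    and b_def: "b = card Bl"
    and r_def: "\<forall>x\<in>D \<times> D. card {blk\<in>Bl. x \<in> blk} = r"
    and lam_ge: "lam \<ge> (gcd r lam)^2"
    and G_sub: "subgroup G (BijGroup (D \<times> D))"
    and G_aut: "\<forall>g\<in>G. design_aut (D \<times> D) Bl g"
    and G_flag: "flag_transitive (D \<times> D) Bl G"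
    and T0_sub: "subgroup T0 (BijGroup D)"
    and T0_2tr: "two_transitive D T0"
    and T_soc: "socle (perm_sub D T0) = T"
    and T_simple: "simple_group (perm_sub D T)"
    and T_nonab: "\<not> comm_group (perm_sub D T)"
    and TT_normal: "base_group D T \<lhd> perm_sub (D \<times> D) G"
    and G_wr: "G \<subseteq> wreath_prod_action D T0"
    and G_rank: "has_rank G (D \<times> D) 3"
  shows "r div gcd r lam = 2 * (\<omega> - 1)
         \<and> real k = real (lam div gcd r lam) * (real \<omega> + 1) / 2 + 1
         \<and> b < 4 * v"
proof -
  have df: "b * k = v * r" "r * (k - 1) = lam * (v - 1)" "r \<ge> k"
    using design_facts[OF des r_def b_def] by auto
  have v: "v = \<omega> * \<omega>" and k2: "2 < k" and kv: "k < v" and l0: "lam > 0"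
    using des card_D unfolding design_2_def by (auto simp: card_cartesian_product)
  have T0B: "T0 \<subseteq> Bij D" using T0_sub unfolding subgroup_def BijGroup_def by auto
  have "D \<noteq> {}" using om5 card_D by auto
  then obtain x1 where x1: "x1 \<in> D" by blast
  obtain c where c: "r * c = lam * (2 * (\<omega> - 1))"
    using subdeg[OF fin card_D des r_def G_aut G_flag T0B G_wr x1 x1] by blast
  define g where "g = gcd r lam"
  define rs where "rs = r div g"
  define ls where "ls = lam div g"
  have g0: "g > 0" using l0 g_def by simp
  have r_eq: "r = rs * g" and l_eq: "lam = ls * g" using g_def rs_def ls_def by auto
  have cop: "coprime rs ls" unfolding rs_def ls_def g_def using l0 by (intro div_gcd_coprime) simp
  have "rs * c * g = ls * (2 * (\<omega> - 1)) * g" using c r_eq l_eq by (simp add: algebra_simps)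
  hence "rs * c = ls * (2 * (\<omega> - 1))" using g0 by simp
  hence "rs dvd ls * (2 * (\<omega> - 1))" by (metis dvd_triv_left)
  hence rsd: "rs dvd 2 * (\<omega> - 1)" using coprime_dvd_mult_right_iff[OF cop] by simp
  have rl: "r > lam"
  proof (rule ccontr)
    assume "\<not> r > lam"
    hence "r * (k - 1) \<le> lam * (k - 1)" by simp
    also have "\<dots> < lam * (v - 1)" using l0 kv k2 by simp
    finally show False using df(2) by simp
  qed
  have rr: "r * r > lam * v"
  proof -
    have "r * r \<ge> r * k" using df(3) by simp
    also have "r * k = r * (k - 1) + r" using k2 by (cases k) auto
    finally have "r * r \<ge> lam * (v - 1) + r" using df(2) by simp
    moreover have "lam * v = lam * (v - 1) + lam" using kv by (cases v) auto
    ultimately have "r * r \<ge> lam * (v - 1) + r" "lam * v = lam * (v - 1) + lam" by auto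
    thus ?thesis using rl by linarith
  qed
  have lsg: "ls \<ge> g"
  proof -
    have "g * g \<le> lam" using lam_ge unfolding g_def by (simp add: power2_eq_square)
    hence "g * g \<le> ls * g" using l_eq by simp
    thus ?thesis using g0 by simp
  qed
  have A: "rs * rs * (g * g) > ls * g * v"
  proof -
    have e1: "r * r = rs * rs * (g * g)" and e2: "lam * v = ls * g * v" using r_eq l_eq by (simp_all add: algebra_simps)
    show ?thesis using rr unfolding e1 e2 .
  qed
  have B: "ls * g * v \<ge> g * g * v" using lsg by simp
  have "g * g * v < rs * rs * (g * g)" using A B by linarith
  hence "(g * g) * v < (g * g) * (rs * rs)" by (simp only: mult.commute)
  hence "v < rs * rs" using mult_less_cancel1[of "g * g" v "rs * rs"] by simp
  hence "rs * rs > \<omega> * \<omega>" using v by simp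
  hence rsw: "rs > \<omega>" using mult_le_mono[of rs \<omega> rs \<omega>] by linarith
  obtain m where m: "2 * (\<omega> - 1) = rs * m" using rsd by blast
  have "m = 1"
  proof -
    have "m \<noteq> 0"
    proof
      assume "m = 0"
      hence "2 * (\<omega> - 1) = 0" using m by simp
      thus False using om5 by simp
    qed
    moreover have "\<not> m \<ge> 2"
    proof
      assume "m \<ge> 2"
      hence "rs * 2 \<le> rs * m" by simp
      thus False using m rsw by linarith
    qed
    ultimately show ?thesis by simp
  qed
  hence rs2: "rs = 2 * (\<omega> - 1)" using m by simp
  have "rs * (k - 1) * g = ls * (v - 1) * g" using df(2) r_eq l_eq by (simp add: algebra_simps)
  hence e: "rs * (k - 1) = ls * (v - 1)" using g0 by simp
  obtain W where W: "\<omega> = W + 1" using om5 by (metis add.commute le_Suc_ex numeral_eq_Suc add_Suc plus_1_eq_Suc)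
  obtain K where K: "k - 1 = K" by blast
  have "v - 1 = W * (\<omega> + 1)" using v W by (simp add: algebra_simps)
  hence "(2 * W) * K = ls * (W * (\<omega> + 1))" using e rs2 W K by simp
  hence "(\<omega> - 1) * (2 * (k - 1)) = (\<omega> - 1) * (ls * (\<omega> + 1))" using W K by (simp add: algebra_simps)
  hence kk: "2 * (k - 1) = ls * (\<omega> + 1)" using om5 by simp
  have ii: "real k = real ls * (real \<omega> + 1) / 2 + 1"
  proof -
    have "real (2 * (k - 1)) = real (ls * (\<omega> + 1))" using kk by simp
    hence "2 * (real k - 1) = real ls * (real \<omega> + 1)" using k2 by (simp add: of_nat_diff algebra_simps)
    thus ?thesis by simp
  qed
  have ls0: "ls > 0" using l0 l_eq by simp
  have "r \<le> 2 * (\<omega> - 1) * ls" using r_eq rs2 lsg by simp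
  also have "\<dots> < 2 * (\<omega> + 1) * ls" using ls0 om5 by (intro mult_strict_right_mono) auto
  also have "\<dots> = 2 * (ls * (\<omega> + 1))" by (simp only: ac_simps)
  also have "\<dots> = 4 * (k - 1)" unfolding kk[symmetric] by simp
  finally have "r < 4 * k" by simp
  hence "v * r < v * (4 * k)" using kv by simp
  hence "b * k < (4 * v) * k" using df(1) by (simp add: algebra_simps)
  hence iii: "b < 4 * v" by simp
  show ?thesis using rs2 ii iii rs_def ls_def g_def by simp
qed

end
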